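(* Let $\Sigma$ be a signature and consider derivations in $\mathcal{J}(\Sigma)$. Suppose $\vdash_{\bar m}\bar s:\Theta\to\Gamma$. (a) If $\vdash_k B$ type $(\Gamma)$, then $\vdash_{k+\max(\bar m)} B[\bar s/\Gamma]$ type $(\Theta)$. (b) If $\vdash_k b:B\ (\Gamma)$, then $\vdash_{k+\max(\bar m)} b[\bar s/\Gamma]:B[\bar s/\Gamma]\ (\Theta)$.
   Context: Fix an infinite set $V$ of variables with decidable equality, and a fresh variable provider: functions $\varphi,\mathsf{fr}$ assigning to each finite $X\subseteq V$ an inhabited subset $\varphi(X)\subseteq V\setminus X$ and an element $\mathsf{fr}(X)\in\varphi(X)$. Fix disjoint sets $F$ (function symbols) and $T$ (type symbols) with decidable equality. Preelements are terms built from variables and symbols of $F$; a pretype is $S(t_1,\ldots,t_n)$ with $S\in T$ and $t_i$ preelements. $\mathrm{V}(E)$ is the set of variables of an expression $E$, $\equiv$ is syntactic identity, and $E[\bar a/\bar x]$ is simultaneous substitution. A precontext is a sequence $\Gamma=x_1:A_1,\ldots,x_n:A_n$ of pretypes with $x_k\in\varphi(\{x_1,\ldots,x_{k-1}\})$ and $\mathrm{V}(A_k)\subseteq\{x_1,\ldots,x_{k-1}\}$; $\mathrm{OV}(\Gamma)=x_1,\ldots,x_n$, $\mathrm{V}(\Gamma)=\{x_1,\ldots,x_n\}$, $\mathrm{Fresh}(\Gamma)=\varphi(\mathrm{V}(\Gamma))$, $\mathrm{fresh}(\Gamma)=\mathsf{fr}(\mathrm{V}(\Gamma))$, $E[\bar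 a/\Gamma]=E[\bar a/x_1,\ldots,x_n]$. Top variables: $\mathrm{TV}(\langle\rangle)=\emptyset$, $\mathrm{TV}(\Gamma,x:A)=(\mathrm{TV}(\Gamma)\setminus\mathrm{V}(A))\cup\{x\}$. A determining sequence for $\Gamma$ is a strictly increasing $\bar i=i_1,\ldots,i_k$ in $\{1,\ldots,n\}$ with $\mathrm{TV}(\Gamma)\subseteq\{x_{i_1},\ldots,x_{i_k}\}$; for $\bar a=a_1,\ldots,a_n$ put $\bar a_{\bar i}=a_{i_1},\ldots,a_{i_k}$. A type predeclaration is $(\Gamma,S,\bar i)$ with $S\in T$, $\bar i$ determining; a function predeclaration is $(\Gamma,f,\bar i,U)$ with $f\in F$, $\bar i$ determining, $U$ a pretype with $\mathrm{V}(U)\subseteq\mathrm{V}(\Gamma)$. A presignature is a set $\Sigma$ of predeclarations with no symbol declared twice. Judgements are "$\Gamma$ context", "$A$ type $(\Gamma)$", "$a:A\ (\Gamma)$". $\mathcal{J}(\Sigma)$ is the smallest set of judgements closed under: (R1) $\langle\rangle$ context; (R2) from $\Gamma$ context and $A$ type $(\Gamma)$ infer $\Gamma,x:A$ context, for $x\in\mathrm{Fresh}(\Gamma)$; (R3) from $x_1:A_1,\ldots,x_n:A_n$ context infer $x_i:A_i\ (x_1:A_1,\ldots,x_n:A_n)$; (R4) if $(\Gamma,S,\bar i)\in\Sigma$ and $\bar a:\Delta\to\Gamma$, infer $S(\bar a_{\bar i})$ type $(\Delta)$; (R5) if $(\Gamma,f,\bar i,U)\in\Sigma$, $\bar a:\Delta\to\Gamma$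 and $U[\bar a/\Gamma]$ type $(\Delta)$, infer $f(\bar a_{\bar i}):U[\bar a/\Gamma]\ (\Delta)$. Here, for $\Gamma=x_1:A_1,\ldots,x_n:A_n$, the context map "$\bar a:\Delta\to\Gamma$" abbreviates the $n+2$ judgements $\Delta$ context, $\Gamma$ context, and $a_k:A_k[a_1,\ldots,a_{k-1}/x_1,\ldots,x_{k-1}]\ (\Delta)$ for $k=1,\ldots,n$. $\Sigma$ is a signature if ($\Gamma$ context)$\in\mathcal{J}(\Sigma)$ whenever $(\Gamma,S,\bar i)\in\Sigma$, and ($U$ type $(\Gamma)$)$\in\mathcal{J}(\Sigma)$ whenever $(\Gamma,f,\bar i,U)\in\Sigma$. Heights: a derivation consisting of a single application of (R1) has height $0$; applying a rule to premisses derived with heights $h_1,\ldots,h_r$ gives height $1+\max_j h_j$. $\vdash_k\mathcal U$ means $\mathcal U$ has a derivation in $\mathcal{J}(\Sigma)$ of height at most $k$. For a context map $\bar a:\Delta\to\Gamma$ with $|\Gamma|=n$, $\vdash_{m_1,\ldots,m_{n+2}}\bar a:\Delta\to\Gamma$ means its $n+2$ constituent judgements (in the order listed above) have derivations of heights at most $m_1,\ldots,m_{n+2}$; $\max(\bar m)$ is the largest $m_j$. *)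

theory Defs
  imports Main
begin

text \<open>Variables have type 'v, function symbols type 'f, type symbols type 't.
  Using separate HOL types makes F and T disjoint; equality is decidable in HOL.\<close>

datatype ('v, 'f) pelem = Var 'v | App 'f "('v, 'f) pelem list"

datatype ('v, 'f, 't) ptype = PT 't "('v, 'f) pelem list"

primrec varsE :: "('v, 'f) pelem \<Rightarrow> 'v set" where
  "varsE (Var x) = {x}"
| "varsE (App f ts) = \<Union> (set (map varsE ts))"

primrec varsT :: "('v, 'f, 't) ptype \<Rightarrow> 'v set" where
  "varsT (PT S ts) = \<Union> (set (map varsE ts))"

primrec substE :: "('v \<Rightarrow> ('v, 'f) pelem) \<Rightarrow> ('v, 'f) pelem \<Rightarrow> ('v, 'f) pelem" where
  "substE \<sigma> (Var x) = \<sigma> x"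
| "substE \<sigma> (App f ts) = App f (map (substE \<sigma>) ts)"

primrec substT :: "('v \<Rightarrow> ('v, 'f) pelem) \<Rightarrow> ('v, 'f, 't) ptype \<Rightarrow> ('v, 'f, 't) ptype" where
  "substT \<sigma> (PT S ts) = PT S (map (substE \<sigma>) ts)"

definition sub :: "'v list \<Rightarrow> ('v, 'f) pelem list \<Rightarrow> 'v \<Rightarrow> ('v, 'f) pelem" where
  "sub xs as = (\<lambda>v. case map_of (zip xs as) v of Some a \<Rightarrow> a | None \<Rightarrow> Var v)"

type_synonym ('v, 'f, 't) ctx = "('v \<times> ('v, 'f, 't) ptype) list"

definition OV :: "('v, 'f, 't) ctx \<Rightarrow> 'v list" where
  "OV \<Gamma> = map fst \<Gamma>"

definition VC :: "('v, 'f, 't) ctx \<Rightarrow> 'v set" where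
  "VC \<Gamma> = set (OV \<Gamma>)"

definition fresh_provider :: "('v set \<Rightarrow> 'v set) \<Rightarrow> ('v set \<Rightarrow> 'v) \<Rightarrow> bool" where
  "fresh_provider \<phi> fr \<longleftrightarrow> infinite (UNIV :: 'v set) \<and>
     (\<forall>X. finite X \<longrightarrow> \<phi> X \<subseteq> - X \<and> fr X \<in> \<phi> X)"

definition precontext :: "('v set \<Rightarrow> 'v set) \<Rightarrow> ('v, 'f, 't) ctx \<Rightarrow> bool" where
  "precontext \<phi> \<Gamma> \<longleftrightarrow> (\<forall>k < length \<Gamma>.
      fst (\<Gamma> ! k) \<in> \<phi> (set (map fst (take k \<Gamma>))) \<and>
      varsT (snd (\<Gamma> ! k)) \<subseteq> set (map fst (take k \<Gamma>)))"

definition TV :: "('v, 'f, 't) ctx \<Rightarrow> 'v set" where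
  "TV \<Gamma> = foldl (\<lambda>S (x, A). (S - varsT A) \<union> {x}) {} \<Gamma>"

text \<open>Determining sequences use 1-based indices i_1 < ... < i_k in {1..n}.\<close>
definition determining :: "('v, 'f, 't) ctx \<Rightarrow> nat list \<Rightarrow> bool" where
  "determining \<Gamma> is \<longleftrightarrow> sorted_wrt (<) is \<and> (\<forall>i \<in> set is. 1 \<le> i \<and> i \<le> length \<Gamma>) \<and>
     TV \<Gamma> \<subseteq> {fst (\<Gamma> ! (i - 1)) | i. i \<in> set is}"

definition sel :: "'a list \<Rightarrow> nat list \<Rightarrow> 'a list" where
  "sel as is = map (\<lambda>i. as ! (i - 1)) is"

datatype ('v, 'f, 't) decl =
    TDecl "('v, 'f, 't) ctx" 't "nat list"
  | FDecl "('v, 'f, 't) ctx" 'f "nat list" "('v, 'f, 't) ptype"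

primrec predecl :: "('v set \<Rightarrow> 'v set) \<Rightarrow> ('v, 'f, 't) decl \<Rightarrow> bool" where
  "predecl \<phi> (TDecl \<Gamma> S is) \<longleftrightarrow> precontext \<phi> \<Gamma> \<and> determining \<Gamma> is"
| "predecl \<phi> (FDecl \<Gamma> f is U) \<longleftrightarrow> precontext \<phi> \<Gamma> \<and> determining \<Gamma> is \<and> varsT U \<subseteq> VC \<Gamma>"

primrec decl_sym :: "('v, 'f, 't) decl \<Rightarrow> 'f + 't" where
  "decl_sym (TDecl \<Gamma> S is) = Inr S"
| "decl_sym (FDecl \<Gamma> f is U) = Inl f"

definition presignature :: "('v set \<Rightarrow> 'v set) \<Rightarrow> ('v, 'f, 't) decl set \<Rightarrow> bool" where
  "presignature \<phi> \<Sigma> \<longleftrightarrow> (\<forall>d \<in> \<Sigma>. predecl \<phi> d) \<and>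
     (\<forall>d1 \<in> \<Sigma>. \<forall>d2 \<in> \<Sigma>. decl_sym d1 = decl_sym d2 \<longrightarrow> d1 = d2)"

datatype ('v, 'f, 't) judg =
    IsCtx "('v, 'f, 't) ctx"
  | IsType "('v, 'f, 't) ctx" "('v, 'f, 't) ptype"
  | HasType "('v, 'f, 't) ctx" "('v, 'f) pelem" "('v, 'f, 't) ptype"

text \<open>The n+2 judgements abbreviated by the context map  as : Delta -> Gamma, in order.\<close>
definition cmap_judgs ::
  "('v, 'f) pelem list \<Rightarrow> ('v, 'f, 't) ctx \<Rightarrow> ('v, 'f, 't) ctx \<Rightarrow> ('v, 'f, 't) judg list" where
  "cmap_judgs as \<Delta> \<Gamma> = [IsCtx \<Delta>, IsCtx \<Gamma>] @
     map (\<lambda>k. HasType \<Delta> (as ! k)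
               (substT (sub (take k (OV \<Gamma>)) (take k as)) (snd (\<Gamma> ! k)))) [0..<length \<Gamma>]"

text \<open>der phi Sigma J h: J has a derivation in J(Sigma) of height exactly h.\<close>
inductive der :: "('v set \<Rightarrow> 'v set) \<Rightarrow> ('v, 'f, 't) decl set \<Rightarrow> ('v, 'f, 't) judg \<Rightarrow> nat \<Rightarrow> bool"
  for \<phi> \<Sigma> where
  R1: "der \<phi> \<Sigma> (IsCtx []) 0"
| R2: "der \<phi> \<Sigma> (IsCtx \<Gamma>) h1 \<Longrightarrow> der \<phi> \<Sigma> (IsType \<Gamma> A) h2 \<Longrightarrow> x \<in> \<phi> (VC \<Gamma>) \<Longrightarrow>
       der \<phi> \<Sigma> (IsCtx (\<Gamma> @ [(x, A)])) (Suc (max h1 h2))"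
| R3: "der \<phi> \<Sigma> (IsCtx \<Gamma>) h \<Longrightarrow> i < length \<Gamma> \<Longrightarrow>
       der \<phi> \<Sigma> (HasType \<Gamma> (Var (fst (\<Gamma> ! i))) (snd (\<Gamma> ! i))) (Suc h)"
| R4: "TDecl \<Gamma> S is \<in> \<Sigma> \<Longrightarrow> length as = length \<Gamma> \<Longrightarrow>
       length hs = length (cmap_judgs as \<Delta> \<Gamma>) \<Longrightarrow>
       (\<forall>j < length hs. der \<phi> \<Sigma> (cmap_judgs as \<Delta> \<Gamma> ! j) (hs ! j)) \<Longrightarrow>
       der \<phi> \<Sigma> (IsType \<Delta> (PT S (sel as is))) (Suc (Max (set hs)))"
| R5: "FDecl \<Gamma> f is U \<in> \<Sigma> \<Longrightarrow> length as = length \<Gamma> \<Longrightarrow>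
       length hs = length (cmap_judgs as \<Delta> \<Gamma>) \<Longrightarrow>
       (\<forall>j < length hs. der \<phi> \<Sigma> (cmap_judgs as \<Delta> \<Gamma> ! j) (hs ! j)) \<Longrightarrow>
       der \<phi> \<Sigma> (IsType \<Delta> (substT (sub (OV \<Gamma>) as) U)) h \<Longrightarrow>
       der \<phi> \<Sigma> (HasType \<Delta> (App f (sel as is)) (substT (sub (OV \<Gamma>) as) U))
         (Suc (max (Max (set hs)) h))"

definition derivable :: "('v set \<Rightarrow> 'v set) \<Rightarrow> ('v, 'f, 't) decl set \<Rightarrow> ('v, 'f, 't) judg \<Rightarrow> bool" where
  "derivable \<phi> \<Sigma> J \<longleftrightarrow> (\<exists>h. der \<phi> \<Sigma> J h)"

definition der_le :: "('v set \<Rightarrow> 'v set) \<Rightarrow> ('v, 'f, 't) decl set \<Rightarrow> nat \<Rightarrow> ('v, 'f, 't) judg \<Rightarrow> bool" where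
  "der_le \<phi> \<Sigma> k J \<longleftrightarrow> (\<exists>h \<le> k. der \<phi> \<Sigma> J h)"

definition cmap_le ::
  "('v set \<Rightarrow> 'v set) \<Rightarrow> ('v, 'f, 't) decl set \<Rightarrow> nat list \<Rightarrow> ('v, 'f) pelem list \<Rightarrow>
   ('v, 'f, 't) ctx \<Rightarrow> ('v, 'f, 't) ctx \<Rightarrow> bool" where
  "cmap_le \<phi> \<Sigma> ms as \<Delta> \<Gamma> \<longleftrightarrow> length as = length \<Gamma> \<and>
     length ms = length (cmap_judgs as \<Delta> \<Gamma>) \<and>
     (\<forall>j < length ms. der_le \<phi> \<Sigma> (ms ! j) (cmap_judgs as \<Delta> \<Gamma> ! j))"

definition signature :: "('v set \<Rightarrow> 'v set) \<Rightarrow> ('v, 'f, 't) decl set \<Rightarrow> bool" where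
  "signature \<phi> \<Sigma> \<longleftrightarrow> presignature \<phi> \<Sigma> \<and>
     (\<forall>\<Gamma> S is. TDecl \<Gamma> S is \<in> \<Sigma> \<longrightarrow> derivable \<phi> \<Sigma> (IsCtx \<Gamma>)) \<and>
     (\<forall>\<Gamma> f is U. FDecl \<Gamma> f is U \<in> \<Sigma> \<longrightarrow> derivable \<phi> \<Sigma> (IsType \<Gamma> U))"

end

theory Submission imports Defs begin

lemma substE_cong: "(\<And>v. v \<in> varsE t \<Longrightarrow> \<sigma> v = \<tau> v) \<Longrightarrow> substE \<sigma> t = substE \<tau> t"
  by (induction t) auto

lemma substT_cong: "(\<And>v. v \<in> varsT A \<Longrightarrow> \<sigma> v = \<tau> v) \<Longrightarrow> substT \<sigma> A = substT \<tau> A"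
  by (cases A) (auto intro!: substE_cong)

lemma substE_comp: "substE \<tau> (substE \<sigma> t) = substE (\<lambda>v. substE \<tau> (\<sigma> v)) t"
  by (induction t) auto

lemma substT_comp: "substT \<tau> (substT \<sigma> A) = substT (\<lambda>v. substE \<tau> (\<sigma> v)) A"
  by (cases A) (auto simp: substE_comp)

lemma sub_map: "length xs = length as \<Longrightarrow> v \<in> set xs \<Longrightarrow> sub xs (map g as) v = g (sub xs as v)"
proof -
  assume l: "length xs = length as" and v: "v \<in> set xs"
  obtain a where a: "map_of (zip xs as) v = Some a"
    using map_of_zip_is_None[OF l, of v] v by (cases "map_of (zip xs as) v") auto
  have "map_of (zip xs (map g as)) v = Some (g a)"
    using a by (simp add: zip_map2 map_of_map)
  then show ?thesis using a by (simp add: sub_def)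
qed

lemma subst_compose:
  assumes "length xs = length as" "varsT A \<subseteq> set xs"
  shows "substT \<tau> (substT (sub xs as) A) = substT (sub xs (map (substE \<tau>) as)) A"
  unfolding substT_comp using assms by (auto intro!: substT_cong simp: sub_map)

lemma sub_take:
  assumes l: "length xs = length as" and v: "v \<in> set (take i xs)"
  shows "sub (take i xs) (take i as) v = sub xs as v"
proof -
  have z: "zip (take i xs) (take i as) = take i (zip xs as)" by (simp add: take_zip)
  have l2: "length (take i xs) = length (take i as)" using l by simp
  obtain a where a: "map_of (take i (zip xs as)) v = Some a"
    using map_of_zip_is_None[OF l2, of v] v z by auto
  have "map_of (zip xs as) v = Some a"
    using a map_of_append[of "take i (zip xs as)" "drop i (zip xs as)"]
    by (simp add: map_add_def)
  then show ?thesis using a z by (simp add: sub_def)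
qed

lemma sub_distinct: "distinct xs \<Longrightarrow> length xs = length as \<Longrightarrow> i < length xs \<Longrightarrow> sub xs as (xs ! i) = as ! i"
  by (simp add: sub_def map_of_zip_nth)

lemma length_cmap[simp]: "length (cmap_judgs as \<Delta> \<Gamma>) = length \<Gamma> + 2"
  by (simp add: cmap_judgs_def)

lemma cmap_0[simp]: "cmap_judgs as \<Delta> \<Gamma> ! 0 = IsCtx \<Delta>"
  by (simp add: cmap_judgs_def)
lemma cmap_1[simp]: "cmap_judgs as \<Delta> \<Gamma> ! Suc 0 = IsCtx \<Gamma>"
  by (simp add: cmap_judgs_def)
lemma cmap_k: "k < length \<Gamma> \<Longrightarrow> cmap_judgs as \<Delta> \<Gamma> ! (k+2) =
   HasType \<Delta> (as ! k) (substT (sub (take k (OV \<Gamma>)) (take k as)) (snd (\<Gamma> ! k)))"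
  by (simp add: cmap_judgs_def nth_append)

lemma cmap_SS: "k < length \<Gamma> \<Longrightarrow> cmap_judgs as \<Delta> \<Gamma> ! Suc (Suc k) =
   HasType \<Delta> (as ! k) (substT (sub (take k (OV \<Gamma>)) (take k as)) (snd (\<Gamma> ! k)))"
  using cmap_k by simp

fun wfJ :: "('v, 'f, 't) judg \<Rightarrow> bool" where
  "wfJ (IsCtx \<Gamma>) = (distinct (map fst \<Gamma>) \<and>
     (\<forall>k<length \<Gamma>. varsT (snd (\<Gamma> ! k)) \<subseteq> set (map fst (take k \<Gamma>))))"
| "wfJ (IsType \<Gamma> A) = (varsT A \<subseteq> VC \<Gamma>)"
| "wfJ (HasType \<Gamma> a A) = (varsE a \<subseteq> VC \<Gamma>)"

lemma sel_idxT:
  assumes "TDecl \<Gamma> S is \<in> \<Sigma>" "presignature \<phi> \<Sigma>"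
  shows "\<forall>i\<in>set is. 1 \<le> i \<and> i \<le> length \<Gamma>"
proof -
  have "predecl \<phi> (TDecl \<Gamma> S is)" using assms unfolding presignature_def by blast
  then have "determining \<Gamma> is" by simp
  then show ?thesis unfolding determining_def by blast
qed

lemma sel_idxF:
  assumes "FDecl \<Gamma> f is U \<in> \<Sigma>" "presignature \<phi> \<Sigma>"
  shows "\<forall>i\<in>set is. 1 \<le> i \<and> i \<le> length \<Gamma>"
proof -
  have "predecl \<phi> (FDecl \<Gamma> f is U)" using assms unfolding presignature_def by blast
  then have "determining \<Gamma> is" by simp
  then show ?thesis unfolding determining_def by blast
qed

lemma vars_sel:
  assumes idx: "\<forall>i\<in>set is. 1 \<le> i \<and> i \<le> length as"
    and v: "\<forall>k<length as. varsE (as ! k) \<subseteq> X"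
  shows "\<Union> (set (map varsE (sel as is))) \<subseteq> X"
proof
  fix x assume "x \<in> \<Union> (set (map varsE (sel as is)))"
  then obtain i where i: "i \<in> set is" "x \<in> varsE (as ! (i - 1))" by (auto simp: sel_def)
  then have "i - 1 < length as" using idx by force
  then show "x \<in> X" using v i by blast
qed

lemma sel_map: "\<forall>i\<in>set is. 1 \<le> i \<and> i \<le> length as \<Longrightarrow> sel (map g as) is = map g (sel as is)"
  unfolding sel_def by (auto intro!: map_cong)

lemma der_wf:
  assumes fp: "fresh_provider \<phi> fr" and ps: "presignature \<phi> \<Sigma>"
  shows "der \<phi> \<Sigma> J h \<Longrightarrow> wfJ J"
proof (induction rule: der.induct)
  case R1
  then show ?case by simp
next
  case (R2 \<Gamma> h1 A h2 x)
  have fin: "finite (VC \<Gamma>)" by (simp add: VC_def)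
  have xn: "x \<notin> VC \<Gamma>" using R2(3) fp fin unfolding fresh_provider_def by blast
  have d: "distinct (map fst (\<Gamma> @ [(x, A)]))"
    using xn R2.IH(1) by (auto simp: VC_def OV_def)
  have p: "varsT (snd ((\<Gamma> @ [(x, A)]) ! k)) \<subseteq> set (map fst (take k (\<Gamma> @ [(x, A)])))"
    if k: "k < length (\<Gamma> @ [(x, A)])" for k
  proof (cases "k < length \<Gamma>")
    case True
    then show ?thesis using R2.IH(1) by (auto simp: nth_append)
  next
    case False
    then have "k = length \<Gamma>" using k by simp
    then show ?thesis using R2.IH(2) by (auto simp: nth_append VC_def OV_def)
  qed
  show ?case using d p by (simp only: wfJ.simps) blast
next
  case (R3 \<Gamma> h i)
  then show ?case by (auto simp: VC_def OV_def)
next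
  case (R4 \<Gamma> S "is" as hs \<Delta>)
  have idx: "\<forall>i\<in>set is. 1 \<le> i \<and> i \<le> length as"
    using sel_idxT[OF R4(1) ps] R4(2) by simp
  have "\<forall>k<length as. varsE (as ! k) \<subseteq> VC \<Delta>"
  proof (intro allI impI)
    fix k assume k: "k < length as"
    have "k + 2 < length hs" using k R4(2,3) by simp
    then have "wfJ (cmap_judgs as \<Delta> \<Gamma> ! (k+2))" using R4.IH by blast
    then show "varsE (as ! k) \<subseteq> VC \<Delta>" using k R4(2) by (simp add: cmap_SS)
  qed
  then show ?case using vars_sel[OF idx] by simp
next
  case (R5 \<Gamma> f "is" U as hs \<Delta> h)
  have idx: "\<forall>i\<in>set is. 1 \<le> i \<and> i \<le> length as"
    using sel_idxF[OF R5(1) ps] R5(2) by simp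
  have "\<forall>k<length as. varsE (as ! k) \<subseteq> VC \<Delta>"
  proof (intro allI impI)
    fix k assume k: "k < length as"
    have "k + 2 < length hs" using k R5(2,3) by simp
    then have "wfJ (cmap_judgs as \<Delta> \<Gamma> ! (k+2))" using R5.IH by blast
    then show "varsE (as ! k) \<subseteq> VC \<Delta>" using k R5(2) by (simp add: cmap_SS)
  qed
  then show ?case using vars_sel[OF idx] by simp
qed

lemma transport:
  assumes pc: "precontext \<phi> \<Gamma>'"
    and len: "length as = length \<Gamma>'"
    and lhs: "length hs = length \<Gamma>' + 2"
    and d1: "der \<phi> \<Sigma> (IsCtx \<Gamma>') (hs ! 1)"
    and ctx\<Theta>: "der_le \<phi> \<Sigma> M (IsCtx \<Theta>)"
    and ih: "\<forall>k<length \<Gamma>'. der_le \<phi> \<Sigma> (hs ! (k+2) + M) (HasType \<Theta> (substE \<sigma> (as ! k))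
               (substT \<sigma> (substT (sub (take k (OV \<Gamma>')) (take k as)) (snd (\<Gamma>' ! k)))))"
  shows "\<exists>hs'. length hs' = length (cmap_judgs (map (substE \<sigma>) as) \<Theta> \<Gamma>') \<and>
     (\<forall>j<length hs'. der \<phi> \<Sigma> (cmap_judgs (map (substE \<sigma>) as) \<Theta> \<Gamma>' ! j) (hs' ! j)) \<and>
     Max (set hs') \<le> Max (set hs) + M"
proof -
  let ?as = "map (substE \<sigma>) as"
  have ih': "\<forall>k<length \<Gamma>'. \<exists>h'. h' \<le> hs ! (k+2) + M \<and> der \<phi> \<Sigma> (cmap_judgs ?as \<Theta> \<Gamma>' ! (k+2)) h'"
  proof (intro allI impI)
    fix k assume k: "k < length \<Gamma>'"
    have vk: "varsT (snd (\<Gamma>' ! k)) \<subseteq> set (take k (OV \<Gamma>'))"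
      using pc k unfolding precontext_def OV_def by (simp add: take_map)
    have "substT \<sigma> (substT (sub (take k (OV \<Gamma>')) (take k as)) (snd (\<Gamma>' ! k))) =
          substT (sub (take k (OV \<Gamma>')) (take k ?as)) (snd (\<Gamma>' ! k))"
      using subst_compose[OF _ vk, of "take k as" \<sigma>] len by (simp add: OV_def take_map)
    then show "\<exists>h'. h' \<le> hs ! (k+2) + M \<and> der \<phi> \<Sigma> (cmap_judgs ?as \<Theta> \<Gamma>' ! (k+2)) h'"
      using spec[OF ih, of k] k len by (simp add: cmap_SS der_le_def)
  qed
  then have "\<forall>k. \<exists>h'. k < length \<Gamma>' \<longrightarrow> h' \<le> hs ! (k+2) + M \<and> der \<phi> \<Sigma> (cmap_judgs ?as \<Theta> \<Gamma>' ! (k+2)) h'"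
    by blast
  from choice[OF this] obtain g where g: "\<forall>k<length \<Gamma>'. g k \<le> hs ! (k+2) + M \<and> der \<phi> \<Sigma> (cmap_judgs ?as \<Theta> \<Gamma>' ! (k+2)) (g k)"
    by blast
  obtain h0 where h0: "h0 \<le> M" "der \<phi> \<Sigma> (IsCtx \<Theta>) h0" using ctx\<Theta> by (auto simp: der_le_def)
  define hs' where "hs' = [h0, hs ! 1] @ map g [0..<length \<Gamma>']"
  have L: "length hs' = length (cmap_judgs ?as \<Theta> \<Gamma>')" by (simp add: hs'_def)
  have D: "\<forall>j<length hs'. der \<phi> \<Sigma> (cmap_judgs ?as \<Theta> \<Gamma>' ! j) (hs' ! j)"
  proof (intro allI impI)
    fix j assume j: "j < length hs'"
    show "der \<phi> \<Sigma> (cmap_judgs ?as \<Theta> \<Gamma>' ! j) (hs' ! j)"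
    proof (cases j)
      case 0 then show ?thesis using h0 by (simp add: hs'_def)
    next
      case (Suc j1)
      show ?thesis
      proof (cases j1)
        case 0 then show ?thesis using d1 Suc by (simp add: hs'_def)
      next
        case (Suc k)
        then have k: "k < length \<Gamma>'" using j \<open>j = Suc j1\<close> by (simp add: hs'_def)
        then show ?thesis using g \<open>j = Suc j1\<close> Suc by (simp add: hs'_def nth_append)
      qed
    qed
  qed
  have hsne: "set hs \<noteq> {}" using lhs by auto
  have mem: "\<And>j. j < length hs \<Longrightarrow> hs ! j \<le> Max (set hs)"
    by (simp add: nth_mem)
  have B: "\<forall>x\<in>set hs'. x \<le> Max (set hs) + M"
  proof
    fix x assume "x \<in> set hs'"
    then consider "x = h0" | "x = hs ! 1" | k where "k < length \<Gamma>'" "x = g k"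
      by (auto simp: hs'_def)
    then show "x \<le> Max (set hs) + M"
    proof cases
      case 1 then show ?thesis using h0 by simp
    next
      case 2
      have "hs ! 1 \<le> Max (set hs)" by (rule mem) (use lhs in simp)
      then show ?thesis using 2 by simp
    next
      case 3
      have "hs ! (k+2) \<le> Max (set hs)" by (rule mem) (use lhs 3 in simp)
      moreover have "g k \<le> hs ! (k+2) + M" using g 3 by blast
      ultimately show ?thesis using 3 by simp
    qed
  qed
  have "Max (set hs') \<le> Max (set hs) + M"
  proof (subst Max_le_iff)
    show "finite (set hs')" by simp
    show "set hs' \<noteq> {}" by (simp add: hs'_def)
    show "\<forall>a\<in>set hs'. a \<le> Max (set hs) + M" using B .
  qed
  then show ?thesis using L D by blast
qed

lemma der_le_mono: "der_le \<phi> \<Sigma> k J \<Longrightarrow> k \<le> k' \<Longrightarrow> der_le \<phi> \<Sigma> k' J"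
  unfolding der_le_def using le_trans by blast

lemma predecl_of: "d \<in> \<Sigma> \<Longrightarrow> presignature \<phi> \<Sigma> \<Longrightarrow> predecl \<phi> d"
  unfolding presignature_def by blast

lemma subst_main:
  assumes ps: "presignature \<phi> \<Sigma>"
    and cm: "cmap_le \<phi> \<Sigma> ms ss \<Theta> \<Gamma>"
    and dist: "distinct (OV \<Gamma>)"
    and pre: "\<forall>k<length \<Gamma>. varsT (snd (\<Gamma> ! k)) \<subseteq> set (take k (OV \<Gamma>))"
    and Mdef: "M = Max (set ms)"
  shows "der \<phi> \<Sigma> J h \<Longrightarrow>
    (\<forall>B. J = IsType \<Gamma> B \<longrightarrow> der_le \<phi> \<Sigma> (h + M) (IsType \<Theta> (substT (sub (OV \<Gamma>) ss) B))) \<and>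
    (\<forall>b B. J = HasType \<Gamma> b B \<longrightarrow> der_le \<phi> \<Sigma> (h + M)
        (HasType \<Theta> (substE (sub (OV \<Gamma>) ss) b) (substT (sub (OV \<Gamma>) ss) B)))"
proof (induction rule: der.induct)
  case R1
  then show ?case by simp
next
  case (R2 \<Gamma> h1 A h2 x)
  then show ?case by simp
next
  let ?\<sigma> = "sub (OV \<Gamma>) ss"
  have lss: "length ss = length \<Gamma>" and lms: "length ms = length \<Gamma> + 2"
    and cmj: "\<forall>j<length ms. der_le \<phi> \<Sigma> (ms ! j) (cmap_judgs ss \<Theta> \<Gamma> ! j)"
    using cm unfolding cmap_le_def by auto
  have msM: "\<And>j. j < length ms \<Longrightarrow> ms ! j \<le> M" using Mdef by (simp add: nth_mem)
  case (R3 \<Gamma>0 h i)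
  show ?case
  proof (intro conjI allI impI)
    fix B assume "HasType \<Gamma>0 (Var (fst (\<Gamma>0 ! i))) (snd (\<Gamma>0 ! i)) = IsType \<Gamma> B"
    then show "der_le \<phi> \<Sigma> (Suc h + M) (IsType \<Theta> (substT ?\<sigma> B))" by simp
  next
    fix b B assume eq: "HasType \<Gamma>0 (Var (fst (\<Gamma>0 ! i))) (snd (\<Gamma>0 ! i)) = HasType \<Gamma> b B"
    then have g: "\<Gamma>0 = \<Gamma>" and bb: "b = Var (fst (\<Gamma> ! i))" and BB: "B = snd (\<Gamma> ! i)" by auto
    have i: "i < length \<Gamma>" using R3(2) g by simp
    have s1: "?\<sigma> (fst (\<Gamma> ! i)) = ss ! i"
      using sub_distinct[OF dist, of ss i] i lss by (simp add: OV_def)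
    have s2: "substT ?\<sigma> (snd (\<Gamma> ! i)) = substT (sub (take i (OV \<Gamma>)) (take i ss)) (snd (\<Gamma> ! i))"
    proof (rule substT_cong)
      fix v assume "v \<in> varsT (snd (\<Gamma> ! i))"
      then have "v \<in> set (take i (OV \<Gamma>))" using pre i by blast
      then show "?\<sigma> v = sub (take i (OV \<Gamma>)) (take i ss) v"
        using sub_take[of "OV \<Gamma>" ss v i] lss by (simp add: OV_def)
    qed
    have "der_le \<phi> \<Sigma> (ms ! (i+2)) (cmap_judgs ss \<Theta> \<Gamma> ! (i+2))" using cmj lms i by simp
    then have "der_le \<phi> \<Sigma> (ms ! (i+2)) (HasType \<Theta> (ss ! i) (substT (sub (take i (OV \<Gamma>)) (take i ss)) (snd (\<Gamma> ! i))))"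
      using cmap_k[OF i] by simp
    moreover have "ms ! (i+2) \<le> Suc h + M" using msM[of "i+2"] lms i by simp
    ultimately show "der_le \<phi> \<Sigma> (Suc h + M) (HasType \<Theta> (substE ?\<sigma> b) (substT ?\<sigma> B))"
      using bb BB s1 s2 der_le_mono by fastforce
  qed
next
  let ?\<sigma> = "sub (OV \<Gamma>) ss"
  have lss: "length ss = length \<Gamma>" and lms: "length ms = length \<Gamma> + 2"
    and cmj: "\<forall>j<length ms. der_le \<phi> \<Sigma> (ms ! j) (cmap_judgs ss \<Theta> \<Gamma> ! j)"
    using cm unfolding cmap_le_def by auto
  have msM: "\<And>j. j < length ms \<Longrightarrow> ms ! j \<le> M" using Mdef by (simp add: nth_mem)
  have ctx\<Theta>: "der_le \<phi> \<Sigma> M (IsCtx \<Theta>)"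
  proof -
    have "der_le \<phi> \<Sigma> (ms ! 0) (IsCtx \<Theta>)" using spec[OF cmj, of 0] lms by simp
    then show ?thesis using der_le_mono msM[of 0] lms by simp
  qed
  case (R4 \<Gamma>' S "is" as hs \<Delta>)
  show ?case
  proof (intro conjI allI impI)
    fix b B assume "IsType \<Delta> (PT S (sel as is)) = HasType \<Gamma> b B"
    then show "der_le \<phi> \<Sigma> (Suc (Max (set hs)) + M) (HasType \<Theta> (substE ?\<sigma> b) (substT ?\<sigma> B))" by simp
  next
    fix B assume eq: "IsType \<Delta> (PT S (sel as is)) = IsType \<Gamma> B"
    then have dd: "\<Delta> = \<Gamma>" and BB: "B = PT S (sel as is)" by auto
    have pd: "predecl \<phi> (TDecl \<Gamma>' S is)" using predecl_of[OF R4(1) ps] .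
    then have pc: "precontext \<phi> \<Gamma>'" by simp
    have idx: "\<forall>i\<in>set is. 1 \<le> i \<and> i \<le> length as" using sel_idxT[OF R4(1) ps] R4(2) by simp
    have d1: "der \<phi> \<Sigma> (IsCtx \<Gamma>') (hs ! 1)" using R4(3,4) by fastforce
    have ih: "\<forall>k<length \<Gamma>'. der_le \<phi> \<Sigma> (hs ! (k+2) + M) (HasType \<Theta> (substE ?\<sigma> (as ! k))
               (substT ?\<sigma> (substT (sub (take k (OV \<Gamma>')) (take k as)) (snd (\<Gamma>' ! k)))))"
    proof (intro allI impI)
      fix k assume k: "k < length \<Gamma>'"
      have "k + 2 < length hs" using k R4(3) by simp
      then have "(\<forall>b B. cmap_judgs as \<Delta> \<Gamma>' ! (k+2) = HasType \<Gamma> b B \<longrightarrow> der_le \<phi> \<Sigma> (hs ! (k+2) + M)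
        (HasType \<Theta> (substE ?\<sigma> b) (substT ?\<sigma> B)))" using R4.IH by blast
      then show "der_le \<phi> \<Sigma> (hs ! (k+2) + M) (HasType \<Theta> (substE ?\<sigma> (as ! k))
               (substT ?\<sigma> (substT (sub (take k (OV \<Gamma>')) (take k as)) (snd (\<Gamma>' ! k)))))"
        using cmap_k[OF k, of as \<Delta>] dd by simp
    qed
    obtain hs' where hs': "length hs' = length (cmap_judgs (map (substE ?\<sigma>) as) \<Theta> \<Gamma>')"
      "\<forall>j<length hs'. der \<phi> \<Sigma> (cmap_judgs (map (substE ?\<sigma>) as) \<Theta> \<Gamma>' ! j) (hs' ! j)"
      "Max (set hs') \<le> Max (set hs) + M"
      using transport[OF pc R4(2) _ d1 ctx\<Theta> ih] R4(3) by auto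
    have "der \<phi> \<Sigma> (IsType \<Theta> (PT S (sel (map (substE ?\<sigma>) as) is))) (Suc (Max (set hs')))"
      by (rule der.R4[OF R4(1) _ hs'(1,2)]) (use R4(2) in simp)
    moreover have "PT S (sel (map (substE ?\<sigma>) as) is) = substT ?\<sigma> B"
      using BB sel_map[OF idx] by simp
    ultimately show "der_le \<phi> \<Sigma> (Suc (Max (set hs)) + M) (IsType \<Theta> (substT ?\<sigma> B))"
      using hs'(3) unfolding der_le_def by (intro exI[of _ "Suc (Max (set hs'))"]) simp
  qed
next
  let ?\<sigma> = "sub (OV \<Gamma>) ss"
  have lss: "length ss = length \<Gamma>" and lms: "length ms = length \<Gamma> + 2"
    and cmj: "\<forall>j<length ms. der_le \<phi> \<Sigma> (ms ! j) (cmap_judgs ss \<Theta> \<Gamma> ! j)"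
    using cm unfolding cmap_le_def by auto
  have msM: "\<And>j. j < length ms \<Longrightarrow> ms ! j \<le> M" using Mdef by (simp add: nth_mem)
  have ctx\<Theta>: "der_le \<phi> \<Sigma> M (IsCtx \<Theta>)"
  proof -
    have "der_le \<phi> \<Sigma> (ms ! 0) (IsCtx \<Theta>)" using spec[OF cmj, of 0] lms by simp
    then show ?thesis using der_le_mono msM[of 0] lms by simp
  qed
  case (R5 \<Gamma>' f "is" U as hs \<Delta> h)
  show ?case
  proof (intro conjI allI impI)
    fix B assume "HasType \<Delta> (App f (sel as is)) (substT (sub (OV \<Gamma>') as) U) = IsType \<Gamma> B"
    then show "der_le \<phi> \<Sigma> (Suc (max (Max (set hs)) h) + M) (IsType \<Theta> (substT ?\<sigma> B))" by simp
  next
    fix b B assume eq: "HasType \<Delta> (App f (sel as is)) (substT (sub (OV \<Gamma>') as) U) = HasType \<Gamma> b B"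
    then have dd: "\<Delta> = \<Gamma>" and bb: "b = App f (sel as is)" and BB: "B = substT (sub (OV \<Gamma>') as) U" by auto
    have pd: "predecl \<phi> (FDecl \<Gamma>' f is U)" using predecl_of[OF R5(1) ps] .
    then have pc: "precontext \<phi> \<Gamma>'" and vU: "varsT U \<subseteq> set (OV \<Gamma>')" by (simp_all add: VC_def)
    have idx: "\<forall>i\<in>set is. 1 \<le> i \<and> i \<le> length as" using sel_idxF[OF R5(1) ps] R5(2) by simp
    have d1: "der \<phi> \<Sigma> (IsCtx \<Gamma>') (hs ! 1)" using R5(3) R5.IH(1) by fastforce
    have ih: "\<forall>k<length \<Gamma>'. der_le \<phi> \<Sigma> (hs ! (k+2) + M) (HasType \<Theta> (substE ?\<sigma> (as ! k))
               (substT ?\<sigma> (substT (sub (take k (OV \<Gamma>')) (take k as)) (snd (\<Gamma>' ! k)))))"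
    proof (intro allI impI)
      fix k assume k: "k < length \<Gamma>'"
      have "k + 2 < length hs" using k R5(3) by simp
      then have "(\<forall>b B. cmap_judgs as \<Delta> \<Gamma>' ! (k+2) = HasType \<Gamma> b B \<longrightarrow> der_le \<phi> \<Sigma> (hs ! (k+2) + M)
        (HasType \<Theta> (substE ?\<sigma> b) (substT ?\<sigma> B)))" using R5.IH(1) by blast
      then show "der_le \<phi> \<Sigma> (hs ! (k+2) + M) (HasType \<Theta> (substE ?\<sigma> (as ! k))
               (substT ?\<sigma> (substT (sub (take k (OV \<Gamma>')) (take k as)) (snd (\<Gamma>' ! k)))))"
        using cmap_k[OF k, of as \<Delta>] dd by simp
    qed
    obtain hs' where hs': "length hs' = length (cmap_judgs (map (substE ?\<sigma>) as) \<Theta> \<Gamma>')"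
      "\<forall>j<length hs'. der \<phi> \<Sigma> (cmap_judgs (map (substE ?\<sigma>) as) \<Theta> \<Gamma>' ! j) (hs' ! j)"
      "Max (set hs') \<le> Max (set hs) + M"
      using transport[OF pc R5(2) _ d1 ctx\<Theta> ih] R5(3) by auto
    have cU: "substT ?\<sigma> (substT (sub (OV \<Gamma>') as) U) = substT (sub (OV \<Gamma>') (map (substE ?\<sigma>) as)) U"
      using subst_compose[OF _ vU] R5(2) by (simp add: OV_def)
    have "der_le \<phi> \<Sigma> (h + M) (IsType \<Theta> (substT ?\<sigma> (substT (sub (OV \<Gamma>') as) U)))"
      using R5.IH(2) dd by simp
    then obtain h' where h': "h' \<le> h + M" "der \<phi> \<Sigma> (IsType \<Theta> (substT (sub (OV \<Gamma>') (map (substE ?\<sigma>) as)) U)) h'"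
      using cU unfolding der_le_def by auto
    have "der \<phi> \<Sigma> (HasType \<Theta> (App f (sel (map (substE ?\<sigma>) as) is)) (substT (sub (OV \<Gamma>') (map (substE ?\<sigma>) as)) U))
       (Suc (max (Max (set hs')) h'))"
      by (rule der.R5[OF R5(1) _ hs'(1,2) h'(2)]) (use R5(2) in simp)
    moreover have "App f (sel (map (substE ?\<sigma>) as) is) = substE ?\<sigma> b"
      using bb sel_map[OF idx] by simp
    moreover have "Suc (max (Max (set hs')) h') \<le> Suc (max (Max (set hs)) h) + M"
      using hs'(3) h'(1) by (simp add: max_def)
    ultimately show "der_le \<phi> \<Sigma> (Suc (max (Max (set hs)) h) + M) (HasType \<Theta> (substE ?\<sigma> b) (substT ?\<sigma> B))"
      using BB cU unfolding der_le_def by (intro exI[of _ "Suc (max (Max (set hs')) h')"]) simp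
  qed
qed

theorem mainTheorem2:
  fixes \<phi> :: "'v set \<Rightarrow> 'v set" and fr :: "'v set \<Rightarrow> 'v"
    and \<Sigma> :: "('v, 'f, 't) decl set"
    and ms :: "nat list" and ss :: "('v, 'f) pelem list"
    and \<Theta> \<Gamma> :: "('v, 'f, 't) ctx"
  assumes "fresh_provider \<phi> fr"
    and "signature \<phi> \<Sigma>"
    and "cmap_le \<phi> \<Sigma> ms ss \<Theta> \<Gamma>"
  shows "(\<forall>k B. der_le \<phi> \<Sigma> k (IsType \<Gamma> B) \<longrightarrow>
            der_le \<phi> \<Sigma> (k + Max (set ms)) (IsType \<Theta> (substT (sub (OV \<Gamma>) ss) B)))
       \<and> (\<forall>k b B. der_le \<phi> \<Sigma> k (HasType \<Gamma> b B) \<longrightarrow>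
            der_le \<phi> \<Sigma> (k + Max (set ms))
              (HasType \<Theta> (substE (sub (OV \<Gamma>) ss) b) (substT (sub (OV \<Gamma>) ss) B)))"
proof -
  have ps: "presignature \<phi> \<Sigma>" using assms(2) unfolding signature_def by blast
  have lms: "length ms = length \<Gamma> + 2"
    and cmj: "\<forall>j<length ms. der_le \<phi> \<Sigma> (ms ! j) (cmap_judgs ss \<Theta> \<Gamma> ! j)"
    using assms(3) unfolding cmap_le_def by auto
  have "der_le \<phi> \<Sigma> (ms ! 1) (IsCtx \<Gamma>)" using spec[OF cmj, of 1] lms by simp
  then obtain h1 where "der \<phi> \<Sigma> (IsCtx \<Gamma>) h1" unfolding der_le_def by blast
  then have w: "wfJ (IsCtx \<Gamma>)" using der_wf[OF assms(1) ps] by blast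
  have dist: "distinct (OV \<Gamma>)" using w by (simp add: OV_def)
  have pre: "\<forall>k<length \<Gamma>. varsT (snd (\<Gamma> ! k)) \<subseteq> set (take k (OV \<Gamma>))"
    using w by (simp add: OV_def take_map)
  note main = subst_main[OF ps assms(3) dist pre refl]
  show ?thesis
  proof (intro conjI allI impI)
    fix k B assume "der_le \<phi> \<Sigma> k (IsType \<Gamma> B)"
    then obtain h where h: "h \<le> k" "der \<phi> \<Sigma> (IsType \<Gamma> B) h" unfolding der_le_def by blast
    have "der_le \<phi> \<Sigma> (h + Max (set ms)) (IsType \<Theta> (substT (sub (OV \<Gamma>) ss) B))"
      using main[OF h(2)] by blast
    then show "der_le \<phi> \<Sigma> (k + Max (set ms)) (IsType \<Theta> (substT (sub (OV \<Gamma>) ss) B))"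
      by (rule der_le_mono) (use h(1) in simp)
  next
    fix k b B assume "der_le \<phi> \<Sigma> k (HasType \<Gamma> b B)"
    then obtain h where h: "h \<le> k" "der \<phi> \<Sigma> (HasType \<Gamma> b B) h" unfolding der_le_def by blast
    have "der_le \<phi> \<Sigma> (h + Max (set ms)) (HasType \<Theta> (substE (sub (OV \<Gamma>) ss) b) (substT (sub (OV \<Gamma>) ss) B))"
      using main[OF h(2)] by blast
    then show "der_le \<phi> \<Sigma> (k + Max (set ms)) (HasType \<Theta> (substE (sub (OV \<Gamma>) ss) b) (substT (sub (OV \<Gamma>) ss) B))"
      by (rule der_le_mono) (use h(1) in simp)
  qed
qed

end
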